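(* Suppose Assumptions A and B hold and let $(\hat x,\hat t)\in\mathcal D_{\mathrm{SDP}}$. If $\mathcal F(\hat x)$ is a definite face of $\Gamma$, then $(\hat x,\hat t)\in\mathcal D$.
   Context: Fix integers $N\ge 1$, $m_I,m_E\ge 0$, $m:=m_I+m_E\ge 1$; $[a,b]=\{a,\dots,b\}$, $[n]=[1,n]$. For $i\in[0,m]$ let $q_i(x)=x^\top A_ix+2b_i^\top x+c_i$ with $A_i\in\mathbb S^N$, $b_i\in\mathbb R^N$, $c_i\in\mathbb R$. The epigraph of the QCQP is $\mathcal D:=\{(x,t)\in\mathbb R^N\times\mathbb R: q_0(x)\le 2t,\ q_i(x)\le0\ \forall i\in[m_I],\ q_i(x)=0\ \forall i\in[m_I+1,m]\}$. Let $Q_i=\begin{pmatrix}c_i& b_i^\top\\ b_i& A_i\end{pmatrix}$ and $\mathcal D_{\mathrm{SDP}}:=\{(x,t):\exists X\in\mathbb S^N$ with $Y=\begin{pmatrix}1&x^\top\\ x& X\end{pmatrix}\succeq0$, $\langle Q_0,Y\rangle\le 2t$, $\langle Q_i,Y\rangle\le 0\ \forall i\in[m_I]$, $\langle Q_i,Y\rangle= 0\ \forall i\in[m_I+1,m]\}$ (trace inner product). For $\gamma\in\mathbb R^m$, $A(\gamma)=A_0+\sum_{i=1}^m\gamma_iA_i$, $q(\gamma,x)=q_0(x)+\sum_{i=1}^m\gamma_iq_i(x)$, and $\Gamma:=\{\gamma\in\mathbb R^m: A(\gamma)\succeq 0,\ \gamma_i\ge 0\ \forall i\in[m_I]\}$.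 Assumption A: the QCQP feasible set $\{x: q_i(x)\le 0\ \forall i\in[m_I],\ q_i(x)=0\ \forall i\in[m_I+1,m]\}$ is nonempty and there is $\gamma^*$ with $\gamma^*_i\ge0$ for $i\in[m_I]$ and $A(\gamma^* )\succ 0$. Assumption B: for every $\hat x\in\mathbb R^N$, if $\sup_{\gamma\in\Gamma}q(\gamma,\hat x)$ is finite then it is attained on $\Gamma$. For such $\hat x$, $\mathcal F(\hat x):=\arg\max_{\gamma\in\Gamma}q(\gamma,\hat x)$, a nonempty face of $\Gamma$ (for $(\hat x,\hat t)\in\mathcal D_{\mathrm{SDP}}$ the supremum is finite). A nonempty face $\mathcal F$ of $\Gamma$ is definite if some $\gamma\in\mathcal F$ has $A(\gamma)\succ0$, and semidefinite otherwise. *)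

theory Defs
  imports "HOL-Analysis.Analysis"
begin

text \<open>Dimension N is the cardinality of the finite index type 'n. Constraint data are
  indexed by nat: index 0 is the objective, indices 1..m the constraints, with
  1..mI inequalities and mI+1..m equalities. Multipliers gamma are functions nat => real
  that vanish outside 1..m (a faithful encoding of R^m).\<close>

definition sym_mat :: "real^'k^'k \<Rightarrow> bool" where
  "sym_mat M \<longleftrightarrow> transpose M = M"

definition psd :: "real^'k^'k \<Rightarrow> bool" where
  "psd M \<longleftrightarrow> sym_mat M \<and> (\<forall>z. 0 \<le> z \<bullet> (M *v z))"

definition pd :: "real^'k^'k \<Rightarrow> bool" where
  "pd M \<longleftrightarrow> sym_mat M \<and> (\<forall>z. z \<noteq> 0 \<longrightarrow> 0 < z \<bullet> (M *v z))"

definition frob :: "real^'k^'k \<Rightarrow> real^'k^'k \<Rightarrow> real" where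
  "frob P Q = (\<Sum>j\<in>UNIV. \<Sum>k\<in>UNIV. P $ j $ k * Q $ j $ k)"

text \<open>Block matrix [[c, b^T],[b, A]] indexed by 'n option, None being the extra 0th index.\<close>
definition lift :: "real \<Rightarrow> real^'n \<Rightarrow> real^'n^'n \<Rightarrow> real^('n option)^('n option)" where
  "lift c b A = (\<chi> j k. (case j of
       None \<Rightarrow> (case k of None \<Rightarrow> c | Some l \<Rightarrow> b $ l)
     | Some j' \<Rightarrow> (case k of None \<Rightarrow> b $ j' | Some l \<Rightarrow> A $ j' $ l)))"

definition qf :: "real^'n^'n \<Rightarrow> real^'n \<Rightarrow> real \<Rightarrow> real^'n \<Rightarrow> real" where
  "qf A b c x = x \<bullet> (A *v x) + 2 * (b \<bullet> x) + c"

definition Agam :: "nat \<Rightarrow> (nat \<Rightarrow> real^'n^'n) \<Rightarrow> (nat \<Rightarrow> real) \<Rightarrow> real^'n^'n" where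
  "Agam m A \<gamma> = A 0 + (\<Sum>i=1..m. \<gamma> i *\<^sub>R A i)"

definition qgam :: "nat \<Rightarrow> (nat \<Rightarrow> real^'n^'n) \<Rightarrow> (nat \<Rightarrow> real^'n) \<Rightarrow> (nat \<Rightarrow> real)
    \<Rightarrow> (nat \<Rightarrow> real) \<Rightarrow> real^'n \<Rightarrow> real" where
  "qgam m A b c \<gamma> x = qf (A 0) (b 0) (c 0) x + (\<Sum>i=1..m. \<gamma> i * qf (A i) (b i) (c i) x)"

definition Gam :: "nat \<Rightarrow> nat \<Rightarrow> (nat \<Rightarrow> real^'n^'n) \<Rightarrow> (nat \<Rightarrow> real) set" where
  "Gam mI m A = {\<gamma>. (\<forall>i. i \<notin> {1..m} \<longrightarrow> \<gamma> i = 0) \<and> psd (Agam m A \<gamma>)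
                      \<and> (\<forall>i\<in>{1..mI}. 0 \<le> \<gamma> i)}"

definition Fface :: "nat \<Rightarrow> nat \<Rightarrow> (nat \<Rightarrow> real^'n^'n) \<Rightarrow> (nat \<Rightarrow> real^'n) \<Rightarrow> (nat \<Rightarrow> real)
    \<Rightarrow> real^'n \<Rightarrow> (nat \<Rightarrow> real) set" where
  "Fface mI m A b c x = {\<gamma> \<in> Gam mI m A. \<forall>\<gamma>'\<in>Gam mI m A. qgam m A b c \<gamma>' x \<le> qgam m A b c \<gamma> x}"

definition definite_face :: "nat \<Rightarrow> (nat \<Rightarrow> real^'n^'n) \<Rightarrow> (nat \<Rightarrow> real) set \<Rightarrow> bool" where
  "definite_face m A F \<longleftrightarrow> F \<noteq> {} \<and> (\<exists>\<gamma>\<in>F. pd (Agam m A \<gamma>))"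

definition in_D :: "nat \<Rightarrow> nat \<Rightarrow> (nat \<Rightarrow> real^'n^'n) \<Rightarrow> (nat \<Rightarrow> real^'n) \<Rightarrow> (nat \<Rightarrow> real)
    \<Rightarrow> real^'n \<Rightarrow> real \<Rightarrow> bool" where
  "in_D mI m A b c x t \<longleftrightarrow> qf (A 0) (b 0) (c 0) x \<le> 2 * t
     \<and> (\<forall>i\<in>{1..mI}. qf (A i) (b i) (c i) x \<le> 0)
     \<and> (\<forall>i\<in>{mI+1..m}. qf (A i) (b i) (c i) x = 0)"

definition in_D_SDP :: "nat \<Rightarrow> nat \<Rightarrow> (nat \<Rightarrow> real^'n^'n) \<Rightarrow> (nat \<Rightarrow> real^'n) \<Rightarrow> (nat \<Rightarrow> real)
    \<Rightarrow> real^'n \<Rightarrow> real \<Rightarrow> bool" where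
  "in_D_SDP mI m A b c x t \<longleftrightarrow> (\<exists>X::real^'n^'n. sym_mat X \<and>
     (let Y = lift 1 x X in psd Y
       \<and> frob (lift (c 0) (b 0) (A 0)) Y \<le> 2 * t
       \<and> (\<forall>i\<in>{1..mI}. frob (lift (c i) (b i) (A i)) Y \<le> 0)
       \<and> (\<forall>i\<in>{mI+1..m}. frob (lift (c i) (b i) (A i)) Y = 0)))"

definition assumptionA :: "nat \<Rightarrow> nat \<Rightarrow> (nat \<Rightarrow> real^'n^'n) \<Rightarrow> (nat \<Rightarrow> real^'n) \<Rightarrow> (nat \<Rightarrow> real)
    \<Rightarrow> bool" where
  "assumptionA mI m A b c \<longleftrightarrow>
     (\<exists>x::real^'n. (\<forall>i\<in>{1..mI}. qf (A i) (b i) (c i) x \<le> 0) \<and> (\<forall>i\<in>{mI+1..m}. qf (A i) (b i) (c i) x = 0))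
   \<and> (\<exists>\<gamma>. (\<forall>i\<in>{1..mI}. 0 \<le> \<gamma> i) \<and> pd (Agam m A \<gamma>))"

definition assumptionB :: "nat \<Rightarrow> nat \<Rightarrow> (nat \<Rightarrow> real^'n^'n) \<Rightarrow> (nat \<Rightarrow> real^'n) \<Rightarrow> (nat \<Rightarrow> real)
    \<Rightarrow> bool" where
  "assumptionB mI m A b c \<longleftrightarrow> (\<forall>x::real^'n.
     (\<exists>M. \<forall>\<gamma>\<in>Gam mI m A. qgam m A b c \<gamma> x \<le> M) \<longrightarrow>
     (\<exists>\<gamma>\<in>Gam mI m A. \<forall>\<gamma>'\<in>Gam mI m A. qgam m A b c \<gamma>' x \<le> qgam m A b c \<gamma> x))"

end

theory Submission imports Defs begin
lemma sym_mat_iff: "sym_mat M \<longleftrightarrow> (\<forall>j k. M$k$j = M$j$k)"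
  unfolding sym_mat_def transpose_def by (auto simp: vec_eq_iff)

lemma Q_axis2: "(t *\<^sub>R axis j (1::real) + axis k 1) \<bullet> (M *v (t *\<^sub>R axis j 1 + axis k 1))
   = t^2 * M$j$j + t * (M$j$k + M$k$j) + M$k$k"
  by (simp add: inner_add_left inner_add_right matrix_vector_right_distrib matrix_vector_mult_scaleR
      inner_axis' inner_axis matrix_vector_mul_component algebra_simps power2_eq_square)

lemma zero_diag:
  fixes M :: "real^'k^'k"
  assumes s: "\<forall>j k. M$k$j = M$j$k" and p: "\<forall>z. 0 \<le> z \<bullet> (M *v z)" and d: "M$j$j = 0"
  shows "M$j$k = 0"
proof (rule ccontr)
  assume ne: "M$j$k \<noteq> 0"
  define t where "t = - (M$k$k + 1) / (2 * M$j$k)"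
  have "0 \<le> t^2 * M$j$j + t * (M$j$k + M$k$j) + M$k$k"
    using p Q_axis2[of t j k M] by metis
  also have "\<dots> = 2 * t * M$j$k + M$k$k" using d s by (simp add: algebra_simps)
  also have "\<dots> = -1" using ne unfolding t_def by (simp add: field_simps)
  finally show False by simp
qed

lemma col_sym: "\<forall>j k. M$k$j = M$j$k \<Longrightarrow> M *v axis j (1::real) = M$j"
  by (simp add: vec_eq_iff matrix_vector_mul_component inner_axis)

lemma cs_ineq:
  fixes M :: "real^'k^'k"
  assumes s: "\<forall>j k. M$k$j = M$j$k" and p: "\<forall>z. 0 \<le> z \<bullet> (M *v z)"
  shows "(M$j \<bullet> z)^2 \<le> M$j$j * (z \<bullet> (M *v z))"
proof (cases "M$j$j = 0")
  case True
  then have "M$j = 0" using zero_diag[OF s p] by (simp add: vec_eq_iff)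
  then show ?thesis by simp
next
  case False
  define d where "d = M$j$j"
  define r where "r = M$j \<bullet> z"
  have d0: "d > 0" using False p[rule_format, of "axis j 1"] unfolding d_def
    by (simp add: matrix_vector_mul_component inner_axis' inner_axis)
  define t where "t = - r / d"
  have "0 \<le> (z + t *\<^sub>R axis j 1) \<bullet> (M *v (z + t *\<^sub>R axis j 1))" using p by blast
  also have "\<dots> = z \<bullet> (M *v z) + 2 * t * r + t^2 * d"
    using col_sym[OF s, of j] s unfolding r_def d_def
    by (simp add: inner_add_left inner_add_right matrix_vector_right_distrib matrix_vector_mult_scaleR
      inner_axis' inner_axis matrix_vector_mul_component algebra_simps power2_eq_square inner_commute)
  also have "\<dots> = z \<bullet> (M *v z) - r^2 / d" unfolding t_def using d0
    by (simp add: field_simps power2_eq_square)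
  finally have "r^2 \<le> d * (z \<bullet> (M *v z))" using d0 by (simp add: field_simps)
  then show ?thesis unfolding r_def d_def .
qed

lemma outer_Q: fixes v z :: "real^'k" shows "z \<bullet> ((\<chi> a b. v$a * v$b) *v z) = (v \<bullet> z)^2"
  by (simp add: inner_vec_def inner_real_def matrix_vector_mult_def power2_eq_square sum_product sum_distrib_left algebra_simps)

lemma frob_outer: fixes v :: "real^'k" shows "frob (\<chi> a b. v$a * v$b) Z = v \<bullet> (Z *v v)"
  by (simp add: frob_def inner_vec_def matrix_vector_mult_def sum_distrib_left algebra_simps)

lemma frob_diff: "frob (P - Q) Z = frob P Z - frob Q Z"
  by (simp add: frob_def algebra_simps sum_subtractf)

lemma frob_psd_aux:
  fixes Z :: "real^'k^'k"
  assumes pZ: "\<forall>z. 0 \<le> z \<bullet> (Z *v z)"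
  shows "\<forall>M::real^'k^'k. card {a. M$a$a \<noteq> 0} = n \<longrightarrow> (\<forall>j k. M$k$j = M$j$k)
     \<longrightarrow> (\<forall>z. 0 \<le> z \<bullet> (M *v z)) \<longrightarrow> 0 \<le> frob M Z"
proof (induction n rule: less_induct)
  case (less n)
  show ?case
  proof (intro allI impI)
    fix M :: "real^'k^'k"
    assume cn: "card {a. M$a$a \<noteq> 0} = n" and s: "\<forall>j k. M$k$j = M$j$k"
      and p: "\<forall>z. 0 \<le> z \<bullet> (M *v z)"
    show "0 \<le> frob M Z"
    proof (cases "\<exists>j. M$j$j \<noteq> 0")
      case False
      then have "\<forall>j k. M$j$k = 0" using zero_diag[OF s p] by blast
      then show ?thesis by (simp add: frob_def)
    next
      case True
      then obtain j where jd: "M$j$j \<noteq> 0" by blast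
      define d where "d = M$j$j"
      have d0: "d > 0" using jd p[rule_format, of "axis j 1"] unfolding d_def
        by (simp add: matrix_vector_mul_component inner_axis' inner_axis)
      define v where "v = (1 / sqrt d) *\<^sub>R M$j"
      define Ou :: "real^'k^'k" where "Ou = (\<chi> a b. v$a * v$b)"
      define M' where "M' = M - Ou"
      have vv: "v$a * v$b = M$j$a * M$j$b / d" for a b
        unfolding v_def using d0 by (simp add: field_simps real_sqrt_mult[symmetric])
      have s': "\<forall>a b. M'$b$a = M'$a$b" using s unfolding M'_def Ou_def by (simp add: algebra_simps)
      have p': "\<forall>z. 0 \<le> z \<bullet> (M' *v z)"
      proof
        fix z
        have "(v \<bullet> z)^2 = (M$j \<bullet> z)^2 / d" unfolding v_def using d0
          by (simp add: power_mult_distrib power_divide)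
        also have "\<dots> \<le> z \<bullet> (M *v z)" using cs_ineq[OF s p, of j z] d0 unfolding d_def
          by (simp add: field_simps)
        finally show "0 \<le> z \<bullet> (M' *v z)" unfolding M'_def Ou_def
          by (simp add: matrix_vector_mult_diff_rdistrib inner_diff_right outer_Q)
      qed
      have sub: "{a. M'$a$a \<noteq> 0} \<subseteq> {a. M$a$a \<noteq> 0} - {j}"
      proof
        fix a assume "a \<in> {a. M'$a$a \<noteq> 0}"
        then have ne: "M$a$a - M$j$a * M$j$a / d \<noteq> 0" unfolding M'_def Ou_def using vv by simp
        have "a \<noteq> j" using ne d0 unfolding d_def by (auto simp: field_simps)
        moreover have "M$a$a \<noteq> 0"
        proof
          assume "M$a$a = 0"
          then have "M$a$j = 0" using zero_diag[OF s p] by blast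
          then show False using ne s `M$a$a = 0` by (metis diff_zero div_0 mult_zero_left)
        qed
        ultimately show "a \<in> {a. M$a$a \<noteq> 0} - {j}" by simp
      qed
      have "card {a. M'$a$a \<noteq> 0} < n"
      proof -
        have "card {a. M'$a$a \<noteq> 0} \<le> card ({a. M$a$a \<noteq> 0} - {j})"
          by (rule card_mono[OF _ sub]) simp
        also have "\<dots> < n" unfolding cn[symmetric] by (rule card_Diff1_less) (use jd in auto)
        finally show ?thesis .
      qed
      then have "0 \<le> frob M' Z" using less.IH s' p' by blast
      moreover have "0 \<le> frob Ou Z" unfolding Ou_def frob_outer using pZ by (simp add: inner_commute)
      moreover have "frob M Z = frob M' Z + frob Ou Z" unfolding M'_def frob_diff by simp
      ultimately show ?thesis by simp
    qed
  qed
qed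

lemma frob_psd:
  fixes Z M :: "real^'k^'k"
  assumes "\<forall>z. 0 \<le> z \<bullet> (Z *v z)" "\<forall>j k. M$k$j = M$j$k" "\<forall>z. 0 \<le> z \<bullet> (M *v z)"
  shows "0 \<le> frob M Z"
  using frob_psd_aux[OF assms(1)] assms(2,3) by blast

lemma Q_cont: "continuous_on S (\<lambda>z::real^'k. z \<bullet> (M *v z))"
  by (intro continuous_on_inner continuous_on_id matrix_vector_mult_linear_continuous_on)

lemma pert:
  fixes M P :: "real^'k^'k"
  assumes pd: "\<forall>z. z \<noteq> 0 \<longrightarrow> 0 < z \<bullet> (M *v z)"
  shows "\<exists>e>0. \<forall>s. \<bar>s\<bar> \<le> e \<longrightarrow> (\<forall>z. 0 \<le> z \<bullet> ((M + s *\<^sub>R P) *v z))"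
proof -
  define S where "S = sphere (0::real^'k) 1"
  obtain k :: 'k where True by blast
  have Sne: "S \<noteq> {}" unfolding S_def using norm_axis_1[of k]
    by (metis dist_0_norm empty_iff mem_sphere norm_one)
  have cS: "compact S" unfolding S_def by simp
  obtain z0 where z0: "z0 \<in> S" "\<forall>y\<in>S. z0 \<bullet> (M *v z0) \<le> y \<bullet> (M *v y)"
    using continuous_attains_inf[OF cS Sne Q_cont[of S M]] by blast
  obtain z1 where z1: "z1 \<in> S" "\<forall>y\<in>S. \<bar>y \<bullet> (P *v y)\<bar> \<le> \<bar>z1 \<bullet> (P *v z1)\<bar>"
    using continuous_attains_sup[OF cS Sne continuous_on_rabs[OF Q_cont[of S P]]] by blast
  define mu where "mu = z0 \<bullet> (M *v z0)"
  define K where "K = \<bar>z1 \<bullet> (P *v z1)\<bar>"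
  have mu0: "mu > 0" unfolding mu_def using pd z0(1) unfolding S_def by (metis mem_sphere_0 norm_zero zero_neq_one)
  have K0: "K \<ge> 0" unfolding K_def by simp
  define e where "e = mu / (K + 1)"
  have e0: "e > 0" unfolding e_def using mu0 K0 by simp
  have eK: "e * K \<le> mu" unfolding e_def using mu0 K0 by (simp add: field_simps)
  show ?thesis
  proof (intro exI[of _ e] conjI e0 allI impI)
    fix s z assume s: "\<bar>s\<bar> \<le> e"
    show "0 \<le> z \<bullet> ((M + s *\<^sub>R P) *v z)"
    proof (cases "z = 0")
      case True then show ?thesis by simp
    next
      case False
      define u where "u = (1 / norm z) *\<^sub>R z"
      have uS: "u \<in> S" unfolding u_def S_def using False by simp
      have zu: "z = norm z *\<^sub>R u" unfolding u_def using False by simp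
      have "\<bar>s * (u \<bullet> (P *v u))\<bar> \<le> e * K"
        unfolding abs_mult using s z1(2) uS K0 unfolding K_def by (intro mult_mono) auto
      moreover have "mu \<le> u \<bullet> (M *v u)" using z0(2) uS unfolding mu_def by blast
      ultimately have "0 \<le> u \<bullet> (M *v u) + s * (u \<bullet> (P *v u))"
        using eK by linarith
      then have "0 \<le> (norm z)^2 * (u \<bullet> (M *v u) + s * (u \<bullet> (P *v u)))" by simp
      also have "\<dots> = (norm z *\<^sub>R u) \<bullet> ((M + s *\<^sub>R P) *v (norm z *\<^sub>R u))"
        by (simp add: matrix_vector_mult_add_rdistrib matrix_vector_mult_scaleR
            inner_add_right algebra_simps power2_eq_square scaleR_matrix_vector_assoc[symmetric])
      finally show ?thesis using zu by metis
    qed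
  qed
qed

lemma sum_option: "sum f (UNIV :: 'a::finite option set) = f None + (\<Sum>l\<in>UNIV. f (Some l))"
proof -
  have U: "(UNIV :: 'a option set) = insert None (range Some)" by (auto simp: UNIV_option_conv)
  have "sum f (insert None (range Some)) = f None + sum f (range Some)" by (rule sum.insert) auto
  also have "sum f (range Some) = sum (f o Some) (UNIV::'a set)" by (rule sum.reindex) simp
  finally show ?thesis by (simp only: U o_def)
qed

lemma frob_comm: "frob P Q = frob Q P"
  by (simp add: frob_def mult.commute)

lemma frob_add1: "frob (P + Q) R = frob P R + frob Q R"
  by (simp add: frob_def distrib_right sum.distrib)

lemma frob_add2: "frob P (Q + R) = frob P Q + frob P R"
  by (simp add: frob_def distrib_left sum.distrib)

lemma frob_scale: "frob (s *\<^sub>R P) R = s * frob P R"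
  by (simp add: frob_def sum_distrib_left mult.assoc)

lemma frob_zero: "frob 0 R = 0"
  by (simp add: frob_def)

lemma frob_sum: "finite I \<Longrightarrow> frob (\<Sum>i\<in>I. g i *\<^sub>R Ai i) Z = (\<Sum>i\<in>I. g i * frob (Ai i) Z)"
  by (induction I rule: finite_induct) (simp_all add: frob_zero frob_add1 frob_scale)

lemma frob_lift: "frob (lift c b A) (lift c' b' A') = c * c' + 2 * (b \<bullet> b') + frob A A'"
proof -
  have "frob (lift c b A) (lift c' b' A') = c * c' + (\<Sum>l\<in>UNIV. b$l * b'$l) + (\<Sum>j\<in>UNIV. b$j * b'$j + (\<Sum>l\<in>UNIV. A$j$l * A'$j$l))"
    unfolding frob_def by (simp only: sum_option) (simp add: lift_def)
  also have "\<dots> = c * c' + 2 * (b \<bullet> b') + frob A A'"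
    by (simp add: frob_def inner_vec_def sum.distrib)
  finally show ?thesis .
qed

lemma outer_opt:
  fixes z :: "real^'n"
  shows "(\<chi> a b. (\<chi> a. case a of None \<Rightarrow> w0 | Some l \<Rightarrow> z$l) $ a * (\<chi> a. case a of None \<Rightarrow> w0 | Some l \<Rightarrow> z$l) $ b)
     = lift (w0 * w0) (w0 *\<^sub>R z) (\<chi> a b. z$a * z$b)"
  by (simp add: vec_eq_iff lift_def split: option.splits)

lemma Agam_comp: "(Agam m A g)$j$k = A 0$j$k + (\<Sum>i=1..m. g i * A i$j$k)"
  by (simp add: Agam_def sum_component)

lemma sym_Agam: "\<forall>i\<in>{0..m}. sym_mat (A i) \<Longrightarrow> sym_mat (Agam m A g)"
  unfolding sym_mat_iff Agam_comp by auto

lemma Agam_pert: "Agam m A (\<lambda>i. g i + s * d i) = Agam m A g + s *\<^sub>R (\<Sum>i=1..m. d i *\<^sub>R A i)"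
  by (simp add: Agam_def scaleR_add_left sum.distrib scaleR_sum_right)

lemma qgam_pert: "qgam m A b c (\<lambda>i. g i + s * d i) x
   = qgam m A b c g x + s * (\<Sum>i=1..m. d i * qf (A i) (b i) (c i) x)"
  by (simp add: qgam_def distrib_right sum.distrib sum_distrib_left mult.assoc)

lemma sum_delta_if: fixes i m :: nat shows "i \<in> {1..m} \<Longrightarrow> (\<Sum>j=1..m. (if j = i then 1 else 0) * (Q j::real)) = Q i"
proof -
  assume i: "i \<in> {1..m}"
  have "(\<Sum>j=1..m. (if j = i then 1 else 0) * (Q j::real)) = (\<Sum>j=1..m. if j = i then Q j else 0)"
    by (rule sum.cong) auto
  also have "\<dots> = Q i" by (subst sum.remove[of _ i]) (use i in auto)
  finally show ?thesis .
qed

theorem mainTheorem3: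
  fixes mI mE m :: nat
    and A :: "nat \<Rightarrow> real^'n^'n" and b :: "nat \<Rightarrow> real^'n" and c :: "nat \<Rightarrow> real"
    and xh :: "real^'n" and th :: real
  assumes "m = mI + mE" and "1 \<le> m"
    and "\<forall>i\<in>{0..m}. sym_mat (A i)"
    and "assumptionA mI m A b c"
    and "assumptionB mI m A b c"
    and "in_D_SDP mI m A b c xh th"
    and "definite_face m A (Fface mI m A b c xh)"
  shows "in_D mI m A b c xh th"
proof -
  note symA = assms(3)
  obtain g where gF: "g \<in> Fface mI m A b c xh" and gpd: "pd (Agam m A g)"
    using assms(7) unfolding definite_face_def by blast
  have gG: "g \<in> Gam mI m A" and gmax: "\<forall>g'\<in>Gam mI m A. qgam m A b c g' xh \<le> qgam m A b c g xh"
    using gF unfolding Fface_def by auto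
  have g0: "\<forall>i. i \<notin> {1..m} \<longrightarrow> g i = 0" and gnn: "\<forall>i\<in>{1..mI}. 0 \<le> g i"
    using gG unfolding Gam_def by auto
  define Q where "Q i = qf (A i) (b i) (c i) xh" for i
  have gpd': "\<forall>z. z \<noteq> 0 \<longrightarrow> 0 < z \<bullet> (Agam m A g *v z)" using gpd unfolding pd_def by blast
  have key: "s * (\<Sum>i=1..m. d i * Q i) \<le> 0"
    if d0: "\<forall>i. i \<notin> {1..m} \<longrightarrow> d i = 0"
      and dp: "\<forall>z. 0 \<le> z \<bullet> ((Agam m A g + s *\<^sub>R (\<Sum>i=1..m. d i *\<^sub>R A i)) *v z)"
      and dn: "\<forall>i\<in>{1..mI}. 0 \<le> g i + s * d i" for d s
  proof -
    have "(\<lambda>i. g i + s * d i) \<in> Gam mI m A"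
      unfolding Gam_def psd_def using g0 d0 dp dn sym_Agam[OF symA] Agam_pert[of m A g s d]
      by auto
    then have "qgam m A b c (\<lambda>i. g i + s * d i) xh \<le> qgam m A b c g xh" using gmax by blast
    then show ?thesis unfolding qgam_pert Q_def by simp
  qed
  have dir: "\<exists>e>0. \<forall>s. \<bar>s\<bar> \<le> e \<longrightarrow> (\<forall>z. 0 \<le> z \<bullet> ((Agam m A g + s *\<^sub>R (\<Sum>i=1..m. d i *\<^sub>R A i)) *v z))" for d
    by (rule pert[OF gpd'])
  have Qle: "Q i \<le> 0" if i: "i \<in> {1..m}" for i
  proof -
    define d where "d j = (if j = i then 1 else 0::real)" for j
    obtain e where e: "e > 0" "\<forall>s. \<bar>s\<bar> \<le> e \<longrightarrow> (\<forall>z. 0 \<le> z \<bullet> ((Agam m A g + s *\<^sub>R (\<Sum>i=1..m. d i *\<^sub>R A i)) *v z))"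
      using dir by blast
    have "e * (\<Sum>j=1..m. d j * Q j) \<le> 0"
      apply (rule key)
      using i e gnn unfolding d_def by auto
    then have "e * Q i \<le> 0" using sum_delta_if[OF i, of Q] unfolding d_def by simp
    then show ?thesis using e(1) by (simp add: mult_le_0_iff)
  qed
  have Qge: "Q i \<ge> 0" if i: "i \<in> {mI+1..m}" for i
  proof -
    have i1: "i \<in> {1..m}" using i by auto
    define d where "d j = (if j = i then 1 else 0::real)" for j
    obtain e where e: "e > 0" "\<forall>s. \<bar>s\<bar> \<le> e \<longrightarrow> (\<forall>z. 0 \<le> z \<bullet> ((Agam m A g + s *\<^sub>R (\<Sum>i=1..m. d i *\<^sub>R A i)) *v z))"
      using dir by blast
    have "(-e) * (\<Sum>j=1..m. d j * Q j) \<le> 0"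
    proof (rule key)
      show "\<forall>i. i \<notin> {1..m} \<longrightarrow> d i = 0" using i unfolding d_def by auto
      show "\<forall>z. 0 \<le> z \<bullet> ((Agam m A g + (-e) *\<^sub>R (\<Sum>i=1..m. d i *\<^sub>R A i)) *v z)"
        using e(2)[rule_format, of "-e"] e(1) by simp
      show "\<forall>j\<in>{1..mI}. 0 \<le> g j + (-e) * d j" using i gnn unfolding d_def by auto
    qed
    then have "(-e) * Q i \<le> 0" using sum_delta_if[OF i1, of Q] unfolding d_def by simp
    then show ?thesis using e(1) by (simp add: zero_le_mult_iff)
  qed
  have Lg: "(\<Sum>i=1..m. g i * Q i) = 0"
  proof -
    obtain e where e: "e > 0" "\<forall>s. \<bar>s\<bar> \<le> e \<longrightarrow> (\<forall>z. 0 \<le> z \<bullet> ((Agam m A g + s *\<^sub>R (\<Sum>i=1..m. g i *\<^sub>R A i)) *v z))"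
      using dir by blast
    define e' where "e' = min e 1"
    have e': "e' > 0" "e' \<le> e" "e' \<le> 1" using e(1) unfolding e'_def by auto
    have "e * (\<Sum>j=1..m. g j * Q j) \<le> 0"
      apply (rule key)
      using e gnn g0 by auto
    then have 1: "(\<Sum>j=1..m. g j * Q j) \<le> 0" using e(1) by (simp add: mult_le_0_iff)
    have "(-e') * (\<Sum>j=1..m. g j * Q j) \<le> 0"
    proof (rule key)
      show "\<forall>i. i \<notin> {1..m} \<longrightarrow> g i = 0" by (rule g0)
      show "\<forall>z. 0 \<le> z \<bullet> ((Agam m A g + (-e') *\<^sub>R (\<Sum>i=1..m. g i *\<^sub>R A i)) *v z)"
        using e(2)[rule_format, of "-e'"] e' by simp
      show "\<forall>i\<in>{1..mI}. 0 \<le> g i + -e' * g i"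
      proof
        fix i assume "i \<in> {1..mI}"
        then have "0 \<le> g i" using gnn by blast
        then have "0 \<le> (1 - e') * g i" using e' by simp
        then show "0 \<le> g i + -e' * g i" by (simp add: algebra_simps)
      qed
    qed
    then have 2: "(\<Sum>j=1..m. g j * Q j) \<ge> 0" using e'(1) by (simp add: zero_le_mult_iff)
    show ?thesis using 1 2 by simp
  qed
  obtain X :: "real^'n^'n" where Xs: "sym_mat X" and Yp: "psd (lift 1 xh X)"
    and c0: "frob (lift (c 0) (b 0) (A 0)) (lift 1 xh X) \<le> 2 * th"
    and cI: "\<forall>i\<in>{1..mI}. frob (lift (c i) (b i) (A i)) (lift 1 xh X) \<le> 0"
    and cE: "\<forall>i\<in>{mI+1..m}. frob (lift (c i) (b i) (A i)) (lift 1 xh X) = 0"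
    using assms(6) unfolding in_D_SDP_def Let_def by blast
  define Y where "Y = lift 1 xh X"
  define Ox :: "real^'n^'n" where "Ox = (\<chi> a b. xh$a * xh$b)"
  define Z where "Z = X - Ox"
  have pZ: "\<forall>z. 0 \<le> z \<bullet> (Z *v z)"
  proof
    fix z :: "real^'n"
    define w0 where "w0 = - (xh \<bullet> z)"
    define w :: "real^'n option" where "w = (\<chi> a. case a of None \<Rightarrow> w0 | Some l \<Rightarrow> z$l)"
    have "0 \<le> w \<bullet> (Y *v w)" using Yp unfolding psd_def Y_def by blast
    also have "\<dots> = frob (\<chi> a b. w$a * w$b) Y" by (rule frob_outer[symmetric])
    also have "\<dots> = frob (lift (w0 * w0) (w0 *\<^sub>R z) (\<chi> a b. z$a * z$b)) Y"
      unfolding w_def by (simp only: outer_opt)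
    also have "\<dots> = w0 * w0 + 2 * ((w0 *\<^sub>R z) \<bullet> xh) + z \<bullet> (X *v z)"
      unfolding Y_def frob_lift frob_outer by simp
    also have "\<dots> = z \<bullet> (X *v z) - (xh \<bullet> z)^2"
      unfolding w0_def by (simp add: inner_commute power2_eq_square)
    also have "\<dots> = z \<bullet> (Z *v z)"
      unfolding Z_def Ox_def by (simp add: matrix_vector_mult_diff_rdistrib inner_diff_right outer_Q)
    finally show "0 \<le> z \<bullet> (Z *v z)" .
  qed
  have Fi: "frob (lift (c i) (b i) (A i)) Y = Q i + frob (A i) Z" for i
  proof -
    have "X = Z + Ox" unfolding Z_def by simp
    then have "frob (A i) X = frob (A i) Z + xh \<bullet> (A i *v xh)"
      unfolding Ox_def by (simp add: frob_add2 frob_comm[of "A i" "\<chi> a b. xh$a * xh$b"] frob_outer)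
    then show ?thesis unfolding Y_def frob_lift Q_def qf_def by simp
  qed
  have Agz: "frob (Agam m A g) Z = frob (A 0) Z + (\<Sum>i=1..m. g i * frob (A i) Z)"
    unfolding Agam_def frob_add1 by (simp add: frob_sum)
  have Agz0: "0 \<le> frob (Agam m A g) Z"
  proof (rule frob_psd[OF pZ])
    show "\<forall>j k. Agam m A g $ k $ j = Agam m A g $ j $ k" using gpd unfolding pd_def sym_mat_iff by blast
    show "\<forall>z. 0 \<le> z \<bullet> (Agam m A g *v z)"
      using gpd' by (metis inner_zero_left order.refl less_imp_le)
  qed
  have terms: "(\<Sum>i=1..m. g i * frob (lift (c i) (b i) (A i)) Y) \<le> 0"
  proof (rule sum_nonpos)
    fix i assume i: "i \<in> {1..m}"
    show "g i * frob (lift (c i) (b i) (A i)) Y \<le> 0"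
    proof (cases "i \<le> mI")
      case True
      then have "0 \<le> g i" "frob (lift (c i) (b i) (A i)) Y \<le> 0" using i gnn cI unfolding Y_def by auto
      then show ?thesis by (simp add: mult_nonneg_nonpos)
    next
      case False
      then have "frob (lift (c i) (b i) (A i)) Y = 0" using i cE unfolding Y_def by auto
      then show ?thesis by simp
    qed
  qed
  have eqS: "frob (lift (c 0) (b 0) (A 0)) Y + (\<Sum>i=1..m. g i * frob (lift (c i) (b i) (A i)) Y)
      = Q 0 + (\<Sum>i=1..m. g i * Q i) + frob (Agam m A g) Z"
    unfolding Fi Agz by (simp add: distrib_left sum.distrib)
  have "Q 0 \<le> 2 * th" using eqS c0 terms Agz0 Lg unfolding Y_def by linarith
  moreover have "\<forall>i\<in>{1..mI}. Q i \<le> 0" using Qle assms(1) by auto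
  moreover have "\<forall>i\<in>{mI+1..m}. Q i = 0"
  proof
    fix i assume i: "i \<in> {mI+1..m}"
    then have "i \<in> {1..m}" by auto
    then show "Q i = 0" using Qle Qge i by (meson order.antisym)
  qed
  ultimately show ?thesis unfolding in_D_def Q_def by blast
qed

end
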